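(* Let $S$ be a finite semigroup. If $S$ is pseudo-nilpotent and the lower non-nilpotent graph $\mathcal{L}_S$ has no edges, then the upper non-nilpotent graph $\mathcal{N}_S$ has no edges.
   Context: For a semigroup $S$, $S^1$ denotes $S$ with an identity adjoined (if $S$ has none). For $x,y\in S$ and $z_1,z_2,\ldots\in S^1$ define recursively $\lambda_0=x$, $\rho_0=y$, $\lambda_{n+1}=\lambda_n z_{n+1}\rho_n$, $\rho_{n+1}=\rho_n z_{n+1}\lambda_n$; write $\lambda_n(x,y,z_1,\ldots,z_n)$ and $\rho_n(x,y,z_1,\ldots,z_n)$. A semigroup $S$ is nilpotent (in the sense of Mal'cev) if there is a positive integer $n$ with $\lambda_n(a,b,c_1,\ldots,c_n)=\rho_n(a,b,c_1,\ldots,c_n)$ for all $a,b\in S$ and $c_1,\ldots,c_n\in S^1$. $\langle X\rangle$ denotes the subsemigroup generated by $X$. The upper non-nilpotent graph $\mathcal{N}_S$ has vertex set $S$, with an edge between $x$ and $y$ iff $\langle x,y\rangle$ is not nilpotent. The lower non-nilpotent graph $\mathcal{L}_S$ has vertex set $S$, with an edge between distinct $x,y\in S$ iff there exist $n\ge 1$ and $w_1,\ldots,w_n\in\langle x,y\rangle^1$ with $x=\lambda_n(x,y,w_1,\ldots,w_n)$ and $y=\rho_n(x,y,w_1,\ldots,w_n)$. The empty set is regarded as an ideal; for an ideal $I$ of $S$, $S/I$ is the Rees factor semigroup, with $S/\emptyset=S$. A semigroup $S$ is pseudo-nilpotent if the following holds: whenever $x,y\in S$, $w_1,\ldots,w_m\in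 S^1$, $T$ is the subsemigroup generated by $x,y$ and those $w_i$ lying in $S$, $I$ is an ideal (possibly empty) of $T$, and $t<m$ are non-negative integers such that, writing $\lambda_k=\lambda_k(x,y,w_1,\ldots,w_k)$ and $\rho_k=\rho_k(x,y,w_1,\ldots,w_k)$, one has $\lambda_t\neq\rho_t$, $(\lambda_t,\rho_t)=(\lambda_m,\rho_m)$ and $\lambda_m,\rho_m\notin I$, then for every $0\le i\le m$ there is an edge in $\mathcal{N}_{T/I}$ between (the images of) $\lambda_i$ and $\rho_i$. *)

theory Defs
  imports Main
begin

definition semigrp :: "'a set \<Rightarrow> ('a \<Rightarrow> 'a \<Rightarrow> 'a) \<Rightarrow> bool" where
  "semigrp S f \<longleftrightarrow> (\<forall>a\<in>S. \<forall>b\<in>S. f a b \<in> S) \<and>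
     (\<forall>a\<in>S. \<forall>b\<in>S. \<forall>c\<in>S. f (f a b) c = f a (f b c))"

text \<open>Elements of S^1 are represented as 'a option: None is the adjoined identity,
  Some c stands for c in S.\<close>
definition in_one :: "'a set \<Rightarrow> 'a option \<Rightarrow> bool" where
  "in_one S w \<longleftrightarrow> (case w of None \<Rightarrow> True | Some c \<Rightarrow> c \<in> S)"

definition mult3 :: "('a \<Rightarrow> 'a \<Rightarrow> 'a) \<Rightarrow> 'a \<Rightarrow> 'a option \<Rightarrow> 'a \<Rightarrow> 'a" where
  "mult3 f a z b = (case z of None \<Rightarrow> f a b | Some c \<Rightarrow> f (f a c) b)"

text \<open>lamrho f x y z n = (lambda_n(x,y,z_1,...,z_n), rho_n(x,y,z_1,...,z_n)).\<close>
primrec lamrho :: "('a \<Rightarrow> 'a \<Rightarrow> 'a) \<Rightarrow> 'a \<Rightarrow> 'a \<Rightarrow> (nat \<Rightarrow> 'a option) \<Rightarrow> nat \<Rightarrow> 'a \<times> 'a" where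
  "lamrho f x y z 0 = (x, y)"
| "lamrho f x y z (Suc n) =
     (let (l, r) = lamrho f x y z n in (mult3 f l (z (Suc n)) r, mult3 f r (z (Suc n)) l))"

definition lam :: "('a \<Rightarrow> 'a \<Rightarrow> 'a) \<Rightarrow> 'a \<Rightarrow> 'a \<Rightarrow> (nat \<Rightarrow> 'a option) \<Rightarrow> nat \<Rightarrow> 'a" where
  "lam f x y z n = fst (lamrho f x y z n)"

definition rho :: "('a \<Rightarrow> 'a \<Rightarrow> 'a) \<Rightarrow> 'a \<Rightarrow> 'a \<Rightarrow> (nat \<Rightarrow> 'a option) \<Rightarrow> nat \<Rightarrow> 'a" where
  "rho f x y z n = snd (lamrho f x y z n)"

text \<open>Mal'cev nilpotency of the semigroup (S, f).\<close>
definition nilpotent :: "'a set \<Rightarrow> ('a \<Rightarrow> 'a \<Rightarrow> 'a) \<Rightarrow> bool" where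
  "nilpotent S f \<longleftrightarrow> (\<exists>n>0. \<forall>a\<in>S. \<forall>b\<in>S. \<forall>c. (\<forall>i\<in>{1..n}. in_one S (c i)) \<longrightarrow>
       lam f a b c n = rho f a b c n)"

inductive_set gen :: "('a \<Rightarrow> 'a \<Rightarrow> 'a) \<Rightarrow> 'a set \<Rightarrow> 'a set" for f X where
  base: "x \<in> X \<Longrightarrow> x \<in> gen f X"
| mult: "a \<in> gen f X \<Longrightarrow> b \<in> gen f X \<Longrightarrow> f a b \<in> gen f X"

definition upper_edge :: "'a set \<Rightarrow> ('a \<Rightarrow> 'a \<Rightarrow> 'a) \<Rightarrow> 'a \<Rightarrow> 'a \<Rightarrow> bool" where
  "upper_edge S f x y \<longleftrightarrow> x \<in> S \<and> y \<in> S \<and> \<not> nilpotent (gen f {x, y}) f"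

definition lower_edge :: "'a set \<Rightarrow> ('a \<Rightarrow> 'a \<Rightarrow> 'a) \<Rightarrow> 'a \<Rightarrow> 'a \<Rightarrow> bool" where
  "lower_edge S f x y \<longleftrightarrow> x \<in> S \<and> y \<in> S \<and> x \<noteq> y \<and>
     (\<exists>n\<ge>1. \<exists>w. (\<forall>i\<in>{1..n}. in_one (gen f {x, y}) (w i)) \<and>
        x = lam f x y w n \<and> y = rho f x y w n)"

text \<open>Ideals (possibly empty) of (T, f).\<close>
definition is_ideal :: "'a set \<Rightarrow> ('a \<Rightarrow> 'a \<Rightarrow> 'a) \<Rightarrow> 'a set \<Rightarrow> bool" where
  "is_ideal T f I \<longleftrightarrow> I \<subseteq> T \<and> (\<forall>a\<in>I. \<forall>t\<in>T. f a t \<in> I \<and> f t a \<in> I)"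

text \<open>Rees factor semigroup T/I on 'a option: Some t for t in T - I, None is the
  zero (the class I), present only if I is nonempty; T/{} = T.\<close>
definition rees_carrier :: "'a set \<Rightarrow> 'a set \<Rightarrow> 'a option set" where
  "rees_carrier T I = Some ` (T - I) \<union> (if I = {} then {} else {None})"

definition rees_mult :: "('a \<Rightarrow> 'a \<Rightarrow> 'a) \<Rightarrow> 'a set \<Rightarrow> 'a option \<Rightarrow> 'a option \<Rightarrow> 'a option" where
  "rees_mult f I a b = (case (a, b) of
      (Some u, Some v) \<Rightarrow> (if f u v \<in> I then None else Some (f u v))
    | _ \<Rightarrow> None)"

definition rees_img :: "'a set \<Rightarrow> 'a \<Rightarrow> 'a option" where
  "rees_img I t = (if t \<in> I then None else Some t)"

definition pseudo_nilpotent :: "'a set \<Rightarrow> ('a \<Rightarrow> 'a \<Rightarrow> 'a) \<Rightarrow> bool" where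
  "pseudo_nilpotent S f \<longleftrightarrow>
    (\<forall>x\<in>S. \<forall>y\<in>S. \<forall>m w T I t.
       (\<forall>i\<in>{1..m}. in_one S (w i)) \<longrightarrow>
       T = gen f ({x, y} \<union> {c. \<exists>i\<in>{1..m}. w i = Some c}) \<longrightarrow>
       is_ideal T f I \<longrightarrow>
       t < m \<longrightarrow>
       lam f x y w t \<noteq> rho f x y w t \<longrightarrow>
       (lam f x y w t, rho f x y w t) = (lam f x y w m, rho f x y w m) \<longrightarrow>
       lam f x y w m \<notin> I \<longrightarrow> rho f x y w m \<notin> I \<longrightarrow>
       (\<forall>i\<le>m. upper_edge (rees_carrier T I) (rees_mult f I)
                 (rees_img I (lam f x y w i)) (rees_img I (rho f x y w i))))"

end

theory Submission
  imports Defs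
begin

lemma lam_Suc: "lam f x y z (Suc n) = mult3 f (lam f x y z n) (z (Suc n)) (rho f x y z n)"
  by (simp add: lam_def rho_def Let_def case_prod_beta)

lemma rho_Suc: "rho f x y z (Suc n) = mult3 f (rho f x y z n) (z (Suc n)) (lam f x y z n)"
  by (simp add: lam_def rho_def Let_def case_prod_beta)

lemma lam0[simp]: "lam f x y z 0 = x" and rho0[simp]: "rho f x y z 0 = y"
  by (simp_all add: lam_def rho_def)

lemma shift:
  "lam f (lam f a b c t) (rho f a b c t) (\<lambda>i. c (i+t)) j = lam f a b c (j+t) \<and>
   rho f (lam f a b c t) (rho f a b c t) (\<lambda>i. c (i+t)) j = rho f a b c (j+t)"
  by (induction j) (simp_all add: lam_Suc rho_Suc)

lemma eq_prop:
  assumes "lam f a b c k = rho f a b c k" "k \<le> n"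
  shows "lam f a b c n = rho f a b c n"
  using assms(2,1)
proof (induction n rule: dec_induct)
  case base then show ?case by simp
next
  case (step n) then show ?case by (simp add: lam_Suc rho_Suc)
qed

lemma mult3_in:
  assumes "\<forall>a\<in>T. \<forall>b\<in>T. f a b \<in> T" "l \<in> T" "r \<in> T" "in_one T z"
  shows "mult3 f l z r \<in> T"
  using assms by (cases z) (auto simp: mult3_def in_one_def)

lemma lamrho_in:
  assumes cl: "\<forall>a\<in>T. \<forall>b\<in>T. f a b \<in> T" and ab: "a \<in> T" "b \<in> T"
    and c: "\<forall>i\<in>{1..n}. in_one T (c i)"
  shows "k \<le> n \<Longrightarrow> lam f a b c k \<in> T \<and> rho f a b c k \<in> T"
proof (induction k)
  case 0 then show ?case using ab by simp
next
  case (Suc k)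
  then have "in_one T (c (Suc k))" using c by auto
  with Suc cl show ?case by (simp add: lam_Suc rho_Suc mult3_in)
qed

lemma gen_sub:
  assumes "X \<subseteq> A" "\<forall>a\<in>A. \<forall>b\<in>A. f a b \<in> A"
  shows "gen f X \<subseteq> A"
proof
  fix x assume "x \<in> gen f X"
  then show "x \<in> A" by induction (use assms in auto)
qed

lemma gen_closed: "\<forall>a\<in>gen f X. \<forall>b\<in>gen f X. f a b \<in> gen f X"
  by (auto intro: gen.mult)

lemma cycle:
  assumes fin: "finite T" and cl: "\<forall>a\<in>T. \<forall>b\<in>T. f a b \<in> T"
    and nn: "\<not> nilpotent T f"
  shows "\<exists>u\<in>T. \<exists>v\<in>T. \<exists>c k. k \<ge> 1 \<and> u \<noteq> v \<and> (\<forall>i\<in>{1..k}. in_one T (c i)) \<and>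
            lam f u v c k = u \<and> rho f u v c k = v"
proof -
  define n where "n = card (T \<times> T) + 1"
  have "n > 0" by (simp add: n_def)
  with nn obtain a b c where ab: "a \<in> T" "b \<in> T" and c: "\<forall>i\<in>{1..n}. in_one T (c i)"
    and ne: "lam f a b c n \<noteq> rho f a b c n"
    unfolding nilpotent_def by blast
  define g where "g k = (lam f a b c k, rho f a b c k)" for k
  have img: "g ` {0..n} \<subseteq> T \<times> T"
    using lamrho_in[OF cl ab c] by (auto simp: g_def)
  have "\<not> inj_on g {0..n}"
  proof
    assume "inj_on g {0..n}"
    from card_inj_on_le[OF this img] fin have "card {0..n} \<le> card (T \<times> T)" by simp
    then show False by (simp add: n_def)
  qed
  then obtain i j where ij: "i \<in> {0..n}" "j \<in> {0..n}" "i \<noteq> j" "g i = g j"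
    unfolding inj_on_def by blast
  then obtain t m where tm: "t < m" "m \<le> n" "g t = g m"
    by (metis atLeastAtMost_iff linorder_neqE_nat)
  have eqs: "lam f a b c t = lam f a b c m" "rho f a b c t = rho f a b c m"
    using tm(3) by (auto simp: g_def)
  define u where "u = lam f a b c t"
  define v where "v = rho f a b c t"
  have uv: "u \<noteq> v" using eq_prop[of f a b c t n] ne tm unfolding u_def v_def by linarith
  have uvT: "u \<in> T" "v \<in> T" using lamrho_in[OF cl ab c, of t] tm unfolding u_def v_def by auto
  define k where "k = m - t"
  have "k \<ge> 1" using tm by (simp add: k_def)
  moreover have "\<forall>i\<in>{1..k}. in_one T ((\<lambda>i. c (i+t)) i)"
    using c tm by (auto simp: k_def)
  moreover have "lam f u v (\<lambda>i. c (i+t)) k = u" "rho f u v (\<lambda>i. c (i+t)) k = v"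
    using shift[of f a b c t k] eqs tm unfolding u_def v_def k_def by auto
  ultimately show ?thesis using uv uvT by (intro bexI[of _ u] bexI[of _ v] exI[of _ "\<lambda>i. c (i+t)"] exI[of _ k]) auto
qed

lemma rees_gen:
  "a' \<in> gen (rees_mult f {}) {Some u, Some v} \<Longrightarrow> \<exists>a\<in>gen f {u,v}. a' = Some a"
proof (induction rule: gen.induct)
  case (base x) then show ?case by (auto intro: gen.base)
next
  case (mult a b) then show ?case by (auto simp: rees_mult_def intro: gen.mult)
qed

lemma rees_lamrho:
  assumes "\<forall>i\<in>{1..n}. c i = None \<or> (\<exists>z. c i = Some (Some z))"
  shows "k \<le> n \<Longrightarrow> lam (rees_mult f {}) (Some a) (Some b) c k = Some (lam f a b (\<lambda>i. map_option the (c i)) k) \<and>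
     rho (rees_mult f {}) (Some a) (Some b) c k = Some (rho f a b (\<lambda>i. map_option the (c i)) k)"
proof (induction k)
  case 0 then show ?case by simp
next
  case (Suc k)
  then have "c (Suc k) = None \<or> (\<exists>z. c (Suc k) = Some (Some z))" using assms by auto
  with Suc show ?case by (auto simp: lam_Suc rho_Suc mult3_def rees_mult_def)
qed

lemma nil_transfer:
  assumes "nilpotent (gen f {u,v}) f"
  shows "nilpotent (gen (rees_mult f {}) {Some u, Some v}) (rees_mult f {})"
proof -
  from assms obtain n where n: "n > 0" and H: "\<forall>a\<in>gen f {u,v}. \<forall>b\<in>gen f {u,v}. \<forall>c.
      (\<forall>i\<in>{1..n}. in_one (gen f {u,v}) (c i)) \<longrightarrow> lam f a b c n = rho f a b c n"
    unfolding nilpotent_def by blast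
  show ?thesis unfolding nilpotent_def
  proof (intro exI[of _ n] conjI ballI allI impI n)
    fix a' b' c
    assume a': "a' \<in> gen (rees_mult f {}) {Some u, Some v}"
      and b': "b' \<in> gen (rees_mult f {}) {Some u, Some v}"
      and c: "\<forall>i\<in>{1..n}. in_one (gen (rees_mult f {}) {Some u, Some v}) (c i)"
    obtain a where a: "a \<in> gen f {u,v}" "a' = Some a" using rees_gen[OF a'] by blast
    obtain b where b: "b \<in> gen f {u,v}" "b' = Some b" using rees_gen[OF b'] by blast
    have c1: "\<forall>i\<in>{1..n}. c i = None \<or> (\<exists>z. c i = Some (Some z))"
    proof
      fix i assume "i \<in> {1..n}"
      with c have "in_one (gen (rees_mult f {}) {Some u, Some v}) (c i)" by blast
      then show "c i = None \<or> (\<exists>z. c i = Some (Some z))"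
        by (cases "c i") (auto simp: in_one_def dest: rees_gen)
    qed
    have c2: "\<forall>i\<in>{1..n}. in_one (gen f {u,v}) (map_option the (c i))"
    proof
      fix i assume i: "i \<in> {1..n}"
      with c have "in_one (gen (rees_mult f {}) {Some u, Some v}) (c i)" by blast
      then show "in_one (gen f {u,v}) (map_option the (c i))"
        by (cases "c i") (auto simp: in_one_def dest: rees_gen)
    qed
    show "lam (rees_mult f {}) a' b' c n = rho (rees_mult f {}) a' b' c n"
      using rees_lamrho[OF c1, of n f a b] H a b c2 by simp
  qed
qed

theorem proposition2p6:
  fixes S :: "'a set" and f :: "'a \<Rightarrow> 'a \<Rightarrow> 'a"
  assumes "semigrp S f"
    and "finite S"
    and "pseudo_nilpotent S f"
    and "\<forall>x\<in>S. \<forall>y\<in>S. \<not> lower_edge S f x y"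
  shows "\<forall>x\<in>S. \<forall>y\<in>S. \<not> upper_edge S f x y"
proof -
  have clS: "\<forall>a\<in>S. \<forall>b\<in>S. f a b \<in> S" using assms(1) by (simp add: semigrp_def)
  have main: "\<And>x y. card (gen f {x,y}) = N \<Longrightarrow> x \<in> S \<Longrightarrow> y \<in> S \<Longrightarrow> \<not> upper_edge S f x y" for N
  proof (induction N rule: less_induct)
    case (less N x y)
    show ?case
    proof
      assume ue: "upper_edge S f x y"
      define T where "T = gen f {x,y}"
      have TS: "T \<subseteq> S" unfolding T_def using gen_sub[of "{x,y}" S f] clS less.prems by auto
      have finT: "finite T" using TS assms(2) finite_subset by blast
      have nnT: "\<not> nilpotent T f" using ue by (simp add: upper_edge_def T_def)
      obtain u v c k where uv: "u \<in> T" "v \<in> T" "k \<ge> 1" "u \<noteq> v"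
        and c: "\<forall>i\<in>{1..k}. in_one T (c i)" and cy: "lam f u v c k = u" "rho f u v c k = v"
        using cycle[OF finT _ nnT] gen_closed unfolding T_def by metis
      have uvS: "u \<in> S" "v \<in> S" using uv TS by auto
      have cS: "\<forall>i\<in>{1..k}. in_one S (c i)"
        using c TS by (auto simp: in_one_def split: option.splits)
      have "\<forall>i\<le>k. upper_edge (rees_carrier (gen f ({u, v} \<union> {z. \<exists>i\<in>{1..k}. c i = Some z})) {})
             (rees_mult f {}) (rees_img {} (lam f u v c i)) (rees_img {} (rho f u v c i))"
        using assms(3) uvS cS uv cy unfolding pseudo_nilpotent_def
        apply -
        apply (drule bspec[of _ _ u], assumption)
        apply (drule bspec[of _ _ v], assumption)
        apply (drule spec[of _ k], drule spec[of _ c])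
        apply (drule spec[of _ "gen f ({u, v} \<union> {z. \<exists>i\<in>{1..k}. c i = Some z})"])
        apply (drule spec[of _ "{}"], drule spec[of _ 0])
        by (simp add: is_ideal_def)
      then have "upper_edge (rees_carrier (gen f ({u, v} \<union> {z. \<exists>i\<in>{1..k}. c i = Some z})) {})
             (rees_mult f {}) (Some u) (Some v)"
        by (auto simp: rees_img_def)
      then have "\<not> nilpotent (gen f {u,v}) f"
        using nil_transfer[of f u v] unfolding upper_edge_def by blast
      then have ueuv: "upper_edge S f u v" using uvS by (simp add: upper_edge_def)
      have sub: "gen f {u,v} \<subseteq> T" proof (rule gen_sub)
        show "{u,v} \<subseteq> T" using uv by simp
        show "\<forall>a\<in>T. \<forall>b\<in>T. f a b \<in> T" unfolding T_def by (rule gen_closed)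
      qed
      have "\<not> card (gen f {u,v}) < N" using less.IH[of _ u v] uvS ueuv by blast
      then have "card T \<le> card (gen f {u,v})" using less.prems unfolding T_def by linarith
      moreover have "card (gen f {u,v}) \<le> card T" by (rule card_mono[OF finT sub])
      ultimately have "card (gen f {u,v}) = card T" by linarith
      then have eq: "gen f {u,v} = T" by (rule card_subset_eq[OF finT sub])
      have c': "\<forall>i\<in>{1..k}. in_one (gen f {u,v}) (c i)" using c eq by simp
      have "lower_edge S f u v"
        unfolding lower_edge_def
        apply (intro conjI uvS uv(4))
        apply (rule exI[of _ k], intro conjI uv(3))
        apply (rule exI[of _ c])
        using c' cy by simp
      then show False using assms(4) uvS by blast
    qed
  qed
  show ?thesis using main by blast
qed

end
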